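(* Let $S:\mathbb{R}^m\times\mathbb{R}^n\to\mathbb{R}^q$ be a bilinear map with lifted linear operator $\mathscr{S}$, let $\mathcal{K}\subseteq\mathbb{R}^m\times\mathbb{R}^n$ be nonempty, and let $\mathcal{K}'\subseteq\mathbb{R}^{m\times n}$ be any set satisfying $\mathcal{K}'\cap\{W:\operatorname{rank}(W)\le 1\}=\{xy^T:(x,y)\in\mathcal{K}\}$. For $z\in\mathbb{R}^q$ let $\mathcal{K}_{\mathrm{opt}}(z)$ be the set of solutions of "find $(x,y)\in\mathcal{K}$ with $S(x,y)=z$" and $\mathcal{K}'_{\mathrm{opt}}(z)$ the set of minimizers of "minimize $\operatorname{rank}(W)$ subject to $\mathscr{S}(W)=z$, $W\in\mathcal{K}'$". Then $\mathcal{K}'_{\mathrm{opt}}(z)=\{xy^T:(x,y)\in\mathcal{K}_{\mathrm{opt}}(z)\}$ holds for every $z\in\{S(x,y):(x,y)\in\mathcal{K}\}$ if and only if it is not the case that $\{0\}\subsetneq\mathcal{K}'\cap\mathcal{N}(\mathscr{S},1)$.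
   Context: A map is bilinear if linear in each argument separately. For $j=1,\dots,q$ let $S_j\in\mathbb{R}^{m\times n}$ be the unique matrix with $(S(x,y))_j=x^TS_jy$; the lifted operator $\mathscr{S}:\mathbb{R}^{m\times n}\to\mathbb{R}^q$ is $(\mathscr{S}(W))_j=\operatorname{tr}(S_j^TW)$, so $\mathscr{S}(xy^T)=S(x,y)$. For $k\ge1$, $\mathcal{N}(\mathscr{S},k)=\{X\in\mathbb{R}^{m\times n}:\operatorname{rank}(X)\le k,\ \mathscr{S}(X)=0\}$. *)

theory Defs
  imports "HOL-Analysis.Analysis"
begin

definition outer :: "real^'m \<Rightarrow> real^'n \<Rightarrow> real^'n^'m" where
  "outer x y = (\<chi> i j. x $ i * y $ j)"

text \<open>The matrix S_j with (S(x,y))_j = x^T S_j y: entries (S_j)_{ik} = (S(e_i,e_k))_j.\<close>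
definition coeff_mat :: "(real^'m \<Rightarrow> real^'n \<Rightarrow> real^'q) \<Rightarrow> 'q \<Rightarrow> real^'n^'m" where
  "coeff_mat S j = (\<chi> i k. S (axis i 1) (axis k 1) $ j)"

definition lift :: "(real^'m \<Rightarrow> real^'n \<Rightarrow> real^'q) \<Rightarrow> real^'n^'m \<Rightarrow> real^'q" where
  "lift S W = (\<chi> j. trace (transpose (coeff_mat S j) ** W))"

definition nullset :: "(real^'m \<Rightarrow> real^'n \<Rightarrow> real^'q) \<Rightarrow> nat \<Rightarrow> (real^'n^'m) set" where
  "nullset S k = {X. rank X \<le> k \<and> lift S X = 0}"

definition Kopt :: "(real^'m \<Rightarrow> real^'n \<Rightarrow> real^'q) \<Rightarrow> ((real^'m) \<times> (real^'n)) set \<Rightarrow> real^'q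
    \<Rightarrow> ((real^'m) \<times> (real^'n)) set" where
  "Kopt S K z = {(x, y). (x, y) \<in> K \<and> S x y = z}"

definition Kopt' :: "(real^'m \<Rightarrow> real^'n \<Rightarrow> real^'q) \<Rightarrow> (real^'n^'m) set \<Rightarrow> real^'q
    \<Rightarrow> (real^'n^'m) set" where
  "Kopt' S K' z = {W. W \<in> K' \<and> lift S W = z \<and>
      (\<forall>W'. W' \<in> K' \<and> lift S W' = z \<longrightarrow> rank W \<le> rank W')}"

end

theory Submission
  imports Defs
begin

lemma lift_outer:
  assumes "bilinear S"
  shows "lift S (outer x y) = S x y"
proof -
  have "S x y = S (\<Sum>i\<in>UNIV. (x$i) *s axis i 1) (\<Sum>k\<in>UNIV. (y$k) *s axis k 1)"
    by (simp add: basis_expansion)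
  also have "\<dots> = (\<Sum>(i,k)\<in>UNIV \<times> UNIV. S ((x$i) *s axis i 1) ((y$k) *s axis k 1))"
    by (rule bilinear_sum[OF assms])
  also have "\<dots> = (\<Sum>(i,k)\<in>UNIV \<times> UNIV. (x$i * y$k) *\<^sub>R S (axis i 1) (axis k 1))"
    by (simp add: scalar_mult_eq_scaleR bilinear_lmul[OF assms] bilinear_rmul[OF assms] mult.commute)
  also have "\<dots> = (\<Sum>i\<in>UNIV. \<Sum>k\<in>UNIV. (x$i * y$k) *\<^sub>R S (axis i 1) (axis k 1))"
    by (rule sum.cartesian_product[symmetric])
  finally have e: "S x y = \<dots>" .
  show ?thesis
    unfolding e lift_def
    apply (simp add: vec_eq_iff trace_def matrix_matrix_mult_def transpose_def coeff_mat_def outer_def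
        sum_component)
    apply (rule allI)
    apply (subst sum.swap)
    apply (simp add: ac_simps)
    done
qed

theorem corollary1:
  fixes S :: "real^'m \<Rightarrow> real^'n \<Rightarrow> real^'q"
    and K :: "((real^'m) \<times> (real^'n)) set"
    and K' :: "(real^'n^'m) set"
  assumes "bilinear S"
    and "K \<noteq> {}"
    and "K' \<inter> {W. rank W \<le> 1} = (\<lambda>(x, y). outer x y) ` K"
  shows "(\<forall>z \<in> (\<lambda>(x, y). S x y) ` K. Kopt' S K' z = (\<lambda>(x, y). outer x y) ` Kopt S K z)
         \<longleftrightarrow> \<not> ({0} \<subset> K' \<inter> nullset S 1)"
proof -
  note lo = lift_outer[OF assms(1)]
  have S00: "S 0 0 = 0" using assms(1) by (simp add: bilinear_def linear_0)
  have o00: "outer (0::real^'m) (0::real^'n) = 0" by (simp add: outer_def vec_eq_iff)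
  have l0: "lift S 0 = 0" using lo[of 0 0] S00 o00 by simp
  have inK': "outer x y \<in> K' \<and> rank (outer x y) \<le> 1" if "(x,y) \<in> K" for x y
    using assms(3) that by blast
  have fromK': "\<exists>x y. (x,y) \<in> K \<and> W = outer x y" if "W \<in> K'" "rank W \<le> 1" for W
  proof -
    have "W \<in> (\<lambda>(x, y). outer x y) ` K" using assms(3) that by blast
    then show ?thesis by auto
  qed
  show ?thesis
  proof
    assume H: "\<forall>z \<in> (\<lambda>(x, y). S x y) ` K. Kopt' S K' z = (\<lambda>(x, y). outer x y) ` Kopt S K z"
    show "\<not> ({0} \<subset> K' \<inter> nullset S 1)"
    proof
      assume P: "{0} \<subset> K' \<inter> nullset S 1"
      then have z0: "0 \<in> K'" by blast
      from P obtain W where W: "W \<in> K'" "rank W \<le> 1" "lift S W = 0" "W \<noteq> 0"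
        unfolding nullset_def by blast
      then obtain x y where xy: "(x,y) \<in> K" "W = outer x y" using fromK' by blast
      have Sxy: "S x y = 0" using W(3) xy(2) lo by simp
      have "0 \<in> (\<lambda>(x, y). S x y) ` K" using xy Sxy by force
      with H have "Kopt' S K' 0 = (\<lambda>(x, y). outer x y) ` Kopt S K 0" by blast
      moreover have "W \<in> (\<lambda>(x, y). outer x y) ` Kopt S K 0"
        using xy Sxy unfolding Kopt_def by force
      ultimately have "W \<in> Kopt' S K' 0" by simp
      then have "rank W \<le> rank (0::real^'n^'m)" using z0 l0 unfolding Kopt'_def by blast
      then show False using W(4) rank_eq_0[of W] by simp
    qed
  next
    assume H: "\<not> ({0} \<subset> K' \<inter> nullset S 1)"
    show "\<forall>z \<in> (\<lambda>(x, y). S x y) ` K. Kopt' S K' z = (\<lambda>(x, y). outer x y) ` Kopt S K z"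
    proof
      fix z assume "z \<in> (\<lambda>(x, y). S x y) ` K"
      then obtain x0 y0 where x0: "(x0,y0) \<in> K" "S x0 y0 = z" by auto
      show "Kopt' S K' z = (\<lambda>(x, y). outer x y) ` Kopt S K z"
      proof
        show "Kopt' S K' z \<subseteq> (\<lambda>(x, y). outer x y) ` Kopt S K z"
        proof
          fix W assume W: "W \<in> Kopt' S K' z"
          have "rank W \<le> rank (outer x0 y0)"
            using W inK'[OF x0(1)] x0(2) lo[of x0 y0] unfolding Kopt'_def by auto
          then have "rank W \<le> 1" using inK'[OF x0(1)] by linarith
          then obtain x y where xy: "(x,y) \<in> K" "W = outer x y"
            using fromK' W unfolding Kopt'_def by blast
          have "S x y = z" using W xy lo unfolding Kopt'_def by auto
          then show "W \<in> (\<lambda>(x, y). outer x y) ` Kopt S K z"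
            using xy unfolding Kopt_def by force
        qed
      next
        show "(\<lambda>(x, y). outer x y) ` Kopt S K z \<subseteq> Kopt' S K' z"
        proof
          fix W assume "W \<in> (\<lambda>(x, y). outer x y) ` Kopt S K z"
          then obtain x y where xy: "(x,y) \<in> K" "S x y = z" "W = outer x y"
            unfolding Kopt_def by auto
          have WK: "W \<in> K'" "rank W \<le> 1" "lift S W = z" using inK'[OF xy(1)] xy lo by auto
          have "rank W \<le> rank W'" if W': "W' \<in> K'" "lift S W' = z" for W'
          proof (cases "rank W' = 0")
            case True
            then have "W' = 0" using rank_eq_0 by blast
            then have z: "z = 0" "0 \<in> K'" using W' l0 by auto
            have "W \<in> K' \<inter> nullset S 1" using WK z unfolding nullset_def by auto
            moreover have "0 \<in> K' \<inter> nullset S 1" using z l0 unfolding nullset_def by auto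
            ultimately have "W = 0" using H by blast
            then show ?thesis by simp
          next
            case False then show ?thesis using WK by linarith
          qed
          then show "W \<in> Kopt' S K' z" using WK unfolding Kopt'_def by blast
        qed
      qed
    qed
  qed
qed

end
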